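(* Fix $E\in\mathbb R$, $\eta,\eta'>0$, a positive integer $N$, and a real symmetric $N\times N$ matrix $\mathbf H$. Let $z=E+\mathbf i\eta$, $z'=E+\mathbf i(\eta+\eta')$, $\mathbf G=(\mathbf H-z)^{-1}=\{G_{jk}\}$ and $\mathbf G'=(\mathbf H-z')^{-1}=\{G'_{jk}\}$. Then for every $j\in[1,N]$, $$\frac{\min\{|G'_{jj}|,|G_{jj}|\}}{\max\{|G'_{jj}|,|G_{jj}|\}}>1-\frac{\eta'}{\eta}.$$ *)

theory Defs
  imports "HOL-Analysis.Analysis"
begin

definition resolvent :: "real^'n^'n \<Rightarrow> complex \<Rightarrow> complex^'n^'n" where
  "resolvent H z = matrix_inv ((\<chi> i j. complex_of_real (H $ i $ j)) - mat z)"

end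

theory Submission
  imports Defs
begin

definition Mz :: "real^'n^'n \<Rightarrow> complex \<Rightarrow> complex^'n^'n" where
  "Mz H z = (\<chi> i j. complex_of_real (H $ i $ j)) - mat z"

lemma Mz_apply: "(Mz H z *v x) $ i = (\<Sum>k\<in>UNIV. of_real (H$i$k) * x$k) - z * x$i"
proof -
  have "(Mz H z *v x) $ i = (\<Sum>k\<in>UNIV. of_real (H$i$k) * x$k - (if i = k then z * x$k else 0))"
    unfolding Mz_def matrix_vector_mult_def mat_def
    by (auto intro!: sum.cong simp: algebra_simps)
  also have "\<dots> = (\<Sum>k\<in>UNIV. of_real (H$i$k) * x$k) - z * x$i"
    by (simp add: sum_subtractf)
  finally show ?thesis .
qed

lemma symH: assumes "transpose H = H" shows "H$k$i = H$i$k"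
proof -
  have "transpose H $ i $ k = H $ i $ k" using assms by simp
  thus ?thesis by (simp add: transpose_def)
qed

lemma quad_im:
  fixes H :: "real^'n^'n"
  assumes sym: "transpose H = H"
  shows "Im (\<Sum>i\<in>UNIV. cnj (x$i) * (Mz H z *v x)$i) = - Im z * (\<Sum>i\<in>UNIV. (cmod (x$i))^2)"
proof -
  define D where "D = (\<Sum>i\<in>UNIV. \<Sum>k\<in>UNIV. of_real (H$i$k) * (cnj (x$i) * x$k))"
  have e1: "(\<Sum>i\<in>UNIV. cnj (x$i) * (Mz H z *v x)$i) = D - z * (\<Sum>i\<in>UNIV. cnj (x$i) * x$i)"
    by (simp add: D_def Mz_apply right_diff_distrib sum_subtractf sum_distrib_left mult_ac)
  have "cnj D = (\<Sum>i\<in>UNIV. \<Sum>k\<in>UNIV. of_real (H$i$k) * (x$i * cnj (x$k)))"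
    by (simp add: D_def)
  also have "\<dots> = (\<Sum>k\<in>UNIV. \<Sum>i\<in>UNIV. of_real (H$i$k) * (x$i * cnj (x$k)))"
    by (rule sum.swap)
  also have "\<dots> = D"
    unfolding D_def using symH[OF sym] by (simp add: mult_ac)
  finally have "cnj D = D" .
  then have imD: "Im D = 0" by (metis complex_cnj_cancel_iff complex_cnj_zero_iff complex_eq_iff
        complex_cnj minus_equation_iff Im_complex_of_real cnj.sel(2) neg_equal_zero)
  have e2: "(\<Sum>i\<in>UNIV. cnj (x$i) * x$i) = of_real (\<Sum>i\<in>UNIV. (cmod (x$i))^2)"
  proof -
    have "(\<Sum>i\<in>UNIV. cnj (x$i) * x$i) = (\<Sum>i\<in>UNIV. of_real ((cmod (x$i))^2))"
      by (intro sum.cong refl) (metis complex_norm_square mult.commute)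
    thus ?thesis by simp
  qed
  show ?thesis unfolding e1 e2 using imD by simp
qed


lemma real_part:
  fixes a b P Q C e e' :: real
  assumes a: "a > 0" and b: "b > 0" and e: "e > 0" and e': "e' > 0"
    and P: "e * P \<le> a" and Q: "(e + e') * Q \<le> b" and "P \<ge> 0" "Q \<ge> 0"
    and d: "\<bar>b - a\<bar> \<le> e' * C" and C: "C \<ge> 0" and CS: "C^2 \<le> P * Q"
  shows "min b a / max b a > 1 - e' / e"
proof -
  have P': "P \<le> a / e" using P e by (simp add: field_simps)
  have Q': "Q \<le> b / (e + e')" using Q e e' by (simp add: field_simps)
  have PQ: "P * Q \<le> (a/e) * (b/(e+e'))" using P' Q' \<open>P \<ge> 0\<close> \<open>Q \<ge> 0\<close>
    by (intro mult_mono) (auto simp: e a)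
  show ?thesis
  proof (cases "b \<le> a")
    case True
    have "(a-b)^2 \<le> (e'*C)^2" using d True by (intro power_mono) auto
    also have "\<dots> = e'^2 * C^2" by (simp add: power_mult_distrib)
    also have "\<dots> \<le> e'^2 * ((a/e) * (b/(e+e')))" using CS PQ by (intro mult_left_mono) auto
    also have "\<dots> < e'^2 * ((a/e)*(a/e))"
    proof -
      have "b/(e+e') \<le> a/(e+e')" using True e e' by (simp add: divide_right_mono)
      also have "\<dots> < a/e" using a e e' by (simp add: divide_strict_left_mono)
      finally have "b/(e+e') < a/e" .
      thus ?thesis using a e e' by (intro mult_strict_left_mono) auto
    qed
    also have "\<dots> = (e' * a / e)^2" by (simp add: power2_eq_square)
    finally have "a - b < e' * a / e"
      by (rule power_less_imp_less_base) (use a e e' in auto)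
    hence "b / a > 1 - e'/e" using a e by (simp add: field_simps)
    thus ?thesis using True by simp
  next
    case False
    have "(b-a)^2 \<le> (e'*C)^2" using d False by (intro power_mono) auto
    also have "\<dots> = e'^2 * C^2" by (simp add: power_mult_distrib)
    also have "\<dots> \<le> e'^2 * ((a/e) * (b/(e+e')))" using CS PQ by (intro mult_left_mono) auto
    also have "\<dots> < e'^2 * ((b/e)*(b/e))"
    proof -
      have "a/e \<le> b/e" using False e by (simp add: divide_right_mono)
      moreover have "b/(e+e') < b/e" using b e e' by (simp add: divide_strict_left_mono)
      ultimately have "(a/e) * (b/(e+e')) < (b/e)*(b/e)" using a b e e'
        by (intro mult_le_less_imp_less) auto
      thus ?thesis using e' by (intro mult_strict_left_mono) auto
    qed
    also have "\<dots> = (e' * b / e)^2" by (simp add: power2_eq_square)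
    finally have "b - a < e' * b / e"
      by (rule power_less_imp_less_base) (use b e e' in auto)
    hence "a / b > 1 - e'/e" using b e by (simp add: field_simps)
    thus ?thesis using False by simp
  qed
qed


lemma sum_delta_r: fixes j :: "'n::finite" shows "(\<Sum>i\<in>UNIV. f i * (if i = j then 1 else 0)) = (f j :: 'a::comm_ring_1)"
proof -
  have "(\<Sum>i\<in>UNIV. f i * (if i = j then 1 else 0)) = (\<Sum>i\<in>UNIV. if j = i then f i else 0)"
    by (intro sum.cong) auto
  thus ?thesis by simp
qed

lemma axis_ne0: "axis j (1::complex) \<noteq> 0"
  by (metis axis_nth zero_index zero_neq_one)

lemma ker_zero:
  fixes H :: "real^'n^'n"
  assumes sym: "transpose H = H" and w: "Im w > 0" and x: "Mz H w *v x = 0"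
  shows "x = 0"
proof -
  have "Im w * (\<Sum>i\<in>UNIV. (cmod (x$i))^2) = 0"
    using quad_im[OF sym, of x w] x by simp
  hence "(\<Sum>i\<in>UNIV. (cmod (x$i))^2) = 0" using w by simp
  hence "\<forall>i\<in>UNIV. (cmod (x$i))^2 = 0" by (subst (asm) sum_nonneg_eq_0_iff) auto
  thus ?thesis by (simp add: vec_eq_iff)
qed

lemma col:
  fixes H :: "real^'n^'n"
  assumes sym: "transpose H = H" and w: "Im w > 0"
  shows "Mz H w *v (resolvent H w *v axis j 1) = axis j 1"
    and "(resolvent H w *v axis j 1) $ j = resolvent H w $ j $ j"
proof -
  have "\<exists>B. B ** Mz H w = mat 1"
    unfolding matrix_left_invertible_ker using ker_zero[OF sym w] by blast
  hence "invertible (Mz H w)" by (simp add: invertible_left_inverse)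
  hence "\<exists>A'. Mz H w ** A' = mat 1 \<and> A' ** Mz H w = mat 1" by (simp add: invertible_def)
  hence "Mz H w ** matrix_inv (Mz H w) = mat 1" unfolding matrix_inv_def by (rule someI_ex[THEN conjunct1])
  moreover have R: "resolvent H w = matrix_inv (Mz H w)" by (simp add: resolvent_def Mz_def)
  ultimately show "Mz H w *v (resolvent H w *v axis j 1) = axis j 1"
    by (simp add: matrix_vector_mul_assoc)
  show "(resolvent H w *v axis j 1) $ j = resolvent H w $ j $ j"
    by (simp add: matrix_vector_mult_def axis_def sum_delta_r)
qed

lemma fact1:
  fixes H :: "real^'n^'n"
  assumes sym: "transpose H = H" and x: "Mz H w *v x = axis j 1"
  shows "Im (x$j) = Im w * (\<Sum>i\<in>UNIV. (cmod (x$i))^2)"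
proof -
  have "(\<Sum>i\<in>UNIV. cnj (x$i) * (Mz H w *v x)$i) = cnj (x$j)"
    unfolding x by (simp add: axis_def sum_delta_r)
  thus ?thesis using quad_im[OF sym, of x w] by simp
qed

lemma fact2:
  fixes H :: "real^'n^'n"
  assumes sym: "transpose H = H" and x: "Mz H w *v x = axis j 1" and y: "Mz H w' *v y = axis j 1"
  shows "y$j - x$j = (w' - w) * (\<Sum>i\<in>UNIV. x$i * y$i)"
proof -
  define T where "T = (\<Sum>i\<in>UNIV. \<Sum>k\<in>UNIV. of_real (H$i$k) * (x$i * y$k))"
  have "(\<Sum>i\<in>UNIV. x$i * (Mz H w' *v y)$i) = x$j" unfolding y by (simp add: axis_def sum_delta_r)
  moreover have "(\<Sum>i\<in>UNIV. x$i * (Mz H w' *v y)$i) = T - w' * (\<Sum>i\<in>UNIV. x$i * y$i)"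
    by (simp add: T_def Mz_apply right_diff_distrib sum_subtractf sum_distrib_left mult_ac)
  moreover have "(\<Sum>i\<in>UNIV. y$i * (Mz H w *v x)$i) = y$j" unfolding x by (simp add: axis_def sum_delta_r)
  moreover have "(\<Sum>i\<in>UNIV. y$i * (Mz H w *v x)$i) = 
      (\<Sum>i\<in>UNIV. \<Sum>k\<in>UNIV. of_real (H$i$k) * (y$i * x$k)) - w * (\<Sum>i\<in>UNIV. x$i * y$i)"
    by (simp add: Mz_apply right_diff_distrib sum_subtractf sum_distrib_left mult_ac)
  moreover have "(\<Sum>i\<in>UNIV. \<Sum>k\<in>UNIV. of_real (H$i$k) * (y$i * x$k)) =
      (\<Sum>k\<in>UNIV. \<Sum>i\<in>UNIV. of_real (H$i$k) * (y$i * x$k))" by (rule sum.swap)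
  moreover have "\<dots> = T" unfolding T_def using symH[OF sym] by (simp add: mult_ac)
  ultimately show ?thesis by (simp add: algebra_simps)
qed

theorem corollaryB2:
  fixes H :: "real^'n^'n" and E \<eta> \<eta>' :: real and j :: 'n
  assumes "\<eta> > 0" and "\<eta>' > 0"
    and "transpose H = H"
  shows "let z = Complex E \<eta>; z' = Complex E (\<eta> + \<eta>');
             g = cmod (resolvent H z $ j $ j); g' = cmod (resolvent H z' $ j $ j)
         in min g' g / max g' g > 1 - \<eta>' / \<eta>"
proof -
  note sym = assms(3)
  define z where "z = Complex E \<eta>"
  define z' where "z' = Complex E (\<eta> + \<eta>')"
  have iz: "Im z > 0" "Im z' > 0" using assms by (auto simp: z_def z'_def)
  define x where "x = resolvent H z *v axis j 1"
  define y where "y = resolvent H z' *v axis j 1"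
  have x: "Mz H z *v x = axis j 1" "x $ j = resolvent H z $ j $ j"
    using col[OF sym iz(1)] unfolding x_def by auto
  have y: "Mz H z' *v y = axis j 1" "y $ j = resolvent H z' $ j $ j"
    using col[OF sym iz(2)] unfolding y_def by auto
  define P where "P = (\<Sum>i\<in>UNIV. (cmod (x$i))^2)"
  define Q where "Q = (\<Sum>i\<in>UNIV. (cmod (y$i))^2)"
  define C where "C = (\<Sum>i\<in>UNIV. cmod (x$i) * cmod (y$i))"
  have P0: "P \<ge> 0" "Q \<ge> 0" "C \<ge> 0" by (auto simp: P_def Q_def C_def intro: sum_nonneg)
  have f1x: "Im (x$j) = \<eta> * P" using fact1[OF sym x(1)] by (simp add: P_def z_def)
  have f1y: "Im (y$j) = (\<eta> + \<eta>') * Q" using fact1[OF sym y(1)] by (simp add: Q_def z'_def)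
  have "P \<noteq> 0"
  proof
    assume "P = 0"
    hence "\<forall>i\<in>UNIV. (cmod (x$i))^2 = 0" unfolding P_def by (subst (asm) sum_nonneg_eq_0_iff) auto
    hence "x = 0" by (simp add: vec_eq_iff)
    thus False using x(1) axis_ne0 by simp
  qed
  hence Ppos: "P > 0" using P0 by simp
  have "Q \<noteq> 0"
  proof
    assume "Q = 0"
    hence "\<forall>i\<in>UNIV. (cmod (y$i))^2 = 0" unfolding Q_def by (subst (asm) sum_nonneg_eq_0_iff) auto
    hence "y = 0" by (simp add: vec_eq_iff)
    thus False using y(1) axis_ne0 by simp
  qed
  hence Qpos: "Q > 0" using P0 by simp
  have ax: "\<eta> * P \<le> cmod (x$j)" using f1x abs_Im_le_cmod[of "x$j"] by simp
  have ay: "(\<eta> + \<eta>') * Q \<le> cmod (y$j)" using f1y abs_Im_le_cmod[of "y$j"] by simp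
  have apos: "cmod (x$j) > 0" using ax Ppos assms(1) by (smt (verit) mult_pos_pos)
  have bpos: "cmod (y$j) > 0" using ay Qpos assms by (smt (verit) mult_pos_pos)
  have dz: "z' - z = \<i> * of_real \<eta>'" by (simp add: z_def z'_def complex_eq_iff)
  have "\<bar>cmod (y$j) - cmod (x$j)\<bar> \<le> cmod (y$j - x$j)" by (rule norm_triangle_ineq3)
  also have "\<dots> = \<eta>' * cmod (\<Sum>i\<in>UNIV. x$i * y$i)"
    using fact2[OF sym x(1) y(1)] dz assms(2) by (simp add: norm_mult)
  also have "\<dots> \<le> \<eta>' * C" unfolding C_def using assms(2)
    by (intro mult_left_mono) (auto intro: order.trans[OF norm_sum] simp: norm_mult)
  finally have d: "\<bar>cmod (y$j) - cmod (x$j)\<bar> \<le> \<eta>' * C" .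
  have CS: "C^2 \<le> P * Q" unfolding C_def P_def Q_def by (rule Cauchy_Schwarz_ineq_sum)
  have "min (cmod (y$j)) (cmod (x$j)) / max (cmod (y$j)) (cmod (x$j)) > 1 - \<eta>' / \<eta>"
    by (rule real_part[OF apos bpos assms(1,2) ax ay P0(1,2) d P0(3) CS])
  thus ?thesis using x(2) y(2) by (simp add: z_def z'_def Let_def)
qed

end
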